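(* Let $T_C$ be a finite complete binary tree with vertices $v_1,\dots,v_M$, and let each vertex $v_i$ carry a parameter $l_i \in [0,1]$. Suppose $l_i = 1$ for every leaf $v_i$ of $T_C$. Then $\sum_{T \in \mathcal{T}(T_C)} p(T) = 1$, where $\mathcal{T}(T_C)$ is the set of all internal trees of $T_C$.
   Context: All trees are rooted, and children are designated left or right. A complete binary tree is a rooted tree in which every non-leaf vertex has exactly two children (a left and a right child). A full binary tree is a rooted tree in which every vertex has 0 or 2 children. An internal tree of $T_C$ is a full binary tree $T$ with $\mathrm{root}(T)=\mathrm{root}(T_C)$ whose vertices and edges are a subset of those of $T_C$ (left/right children as in $T_C$). For an internal tree $T$ with leaf set $L(T)$, its probability is $p(T) = \pi(\mathrm{root}(T))$, where $\pi$ is defined recursively on vertices of $T$ by $\pi(v_i) = l_i$ if $v_i \in L(T)$, and $\pi(v_i) = (1-l_i)\,\pi(\mathrm{left}(v_i))\,\pi(\mathrm{right}(v_i))$ otherwise, with $\mathrm{left}(v_i),\mathrm{right}(v_i)$ the left and right children of $v_i$ in $T$. *)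

theory Defs
  imports Complex_Main
begin

text \<open>Every tree of this type is thus complete (each non-leaf vertex has exactly two children).\<close>
datatype 'v btree = Lf 'v | Nd 'v "'v btree" "'v btree"

fun root :: "'v btree \<Rightarrow> 'v" where
  "root (Lf v) = v"
| "root (Nd v l r) = v"

fun vertices :: "'v btree \<Rightarrow> 'v list" where
  "vertices (Lf v) = [v]"
| "vertices (Nd v l r) = v # vertices l @ vertices r"

fun leaves :: "'v btree \<Rightarrow> 'v set" where
  "leaves (Lf v) = {v}"
| "leaves (Nd v l r) = leaves l \<union> leaves r"

text \<open>internal_tree T TC: T is a full binary tree with the same root as TC whose
  vertices and edges (with left/right orientation) are among those of TC.\<close>
fun internal_tree :: "'v btree \<Rightarrow> 'v btree \<Rightarrow> bool" where
  "internal_tree (Lf a) t = (a = root t)"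
| "internal_tree (Nd a l r) (Lf b) = False"
| "internal_tree (Nd a l r) (Nd b l' r') = (a = b \<and> internal_tree l l' \<and> internal_tree r r')"

fun tree_prob :: "('v \<Rightarrow> real) \<Rightarrow> 'v btree \<Rightarrow> real" where
  "tree_prob l (Lf v) = l v"
| "tree_prob l (Nd v t1 t2) = (1 - l v) * tree_prob l t1 * tree_prob l t2"

end

theory Submission
  imports Defs
begin

lemma it_Lf: "{T. internal_tree T (Lf b)} = {Lf b}"
proof -
  have "internal_tree T (Lf b) \<longleftrightarrow> T = Lf b" for T by (cases T) auto
  then show ?thesis by auto
qed

lemma it_Nd: "{T. internal_tree T (Nd b x y)} =
  insert (Lf b) ((\<lambda>(p,q). Nd b p q) ` ({T. internal_tree T x} \<times> {T. internal_tree T y}))"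
proof -
  have "internal_tree T (Nd b x y) \<longleftrightarrow> T = Lf b \<or> (\<exists>p q. T = Nd b p q \<and> internal_tree p x \<and> internal_tree q y)" for T
    by (cases T) auto
  then show ?thesis by auto
qed

lemma it_finite: "finite {T. internal_tree T TC}"
  by (induction TC) (auto simp: it_Lf it_Nd)

lemma it_sum:
  assumes "\<And>v. v \<in> leaves TC \<Longrightarrow> l v = 1"
  shows "(\<Sum>T\<in>{T. internal_tree T TC}. tree_prob l T) = 1"
  using assms
proof (induction TC)
  case (Lf x)
  then show ?case by (simp add: it_Lf)
next
  case (Nd b x y)
  have IH1: "(\<Sum>T\<in>{T. internal_tree T x}. tree_prob l T) = 1" using Nd by auto
  have IH2: "(\<Sum>T\<in>{T. internal_tree T y}. tree_prob l T) = 1" using Nd by auto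
  let ?A = "{T. internal_tree T x} \<times> {T. internal_tree T y}"
  have fin: "finite ?A" using it_finite by auto
  have inj: "inj_on (\<lambda>(p,q). Nd b p q) ?A" by (auto simp: inj_on_def)
  have nin: "Lf b \<notin> (\<lambda>(p,q). Nd b p q) ` ?A" by auto
  have "(\<Sum>T\<in>(\<lambda>(p,q). Nd b p q) ` ?A. tree_prob l T) = (\<Sum>z\<in>?A. tree_prob l (case z of (p,q) \<Rightarrow> Nd b p q))"
    using sum.reindex[OF inj] by simp
  also have "\<dots> = (\<Sum>z\<in>?A. (1 - l b) * (tree_prob l (fst z) * tree_prob l (snd z)))"
    by (intro sum.cong) auto
  also have "\<dots> = (1 - l b) * ((\<Sum>p\<in>{T. internal_tree T x}. tree_prob l p) * (\<Sum>q\<in>{T. internal_tree T y}. tree_prob l q))"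
  proof -
    have "(\<Sum>z\<in>?A. tree_prob l (fst z) * tree_prob l (snd z)) =
      (\<Sum>p\<in>{T. internal_tree T x}. tree_prob l p) * (\<Sum>q\<in>{T. internal_tree T y}. tree_prob l q)"
      by (simp add: sum_product sum.cartesian_product split_beta)
    then show ?thesis by (simp add: sum_distrib_left[symmetric])
  qed
  also have "\<dots> = 1 - l b" using IH1 IH2 by simp
  finally show ?case using fin nin by (simp add: it_Nd)
qed

theorem mainTheorem2:
  fixes TC :: "'v btree" and l :: "'v \<Rightarrow> real"
  assumes "distinct (vertices TC)"
    and "\<And>v. v \<in> set (vertices TC) \<Longrightarrow> 0 \<le> l v \<and> l v \<le> 1"
    and "\<And>v. v \<in> leaves TC \<Longrightarrow> l v = 1"
  shows "(\<Sum>T\<in>{T. internal_tree T TC}. tree_prob l T) = 1"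
  using it_sum assms(3) by blast

end
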